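(* There exists an Orlicz function $\Phi$ on $[0,\infty)$ such that $C_\Phi^\infty\cong\{t\}$ and $E_\Phi^\infty\not\equiv\{t\}$.
   Context: An Orlicz function is an increasing convex function $F$ on $[0,\infty)$ with $F(0)=0$ and $\lim_{t\to\infty}F(t)=\infty$. For an Orlicz function $F$ and $A>0$, let $E_{F,A}^\infty$ be the closure in $C[0,1]$ of the set of functions $\{x\mapsto F(xy)/F(y):\ y>A\}$ (on $[0,1]$); set $E_F^\infty:=\bigcap_{A>0}E_{F,A}^\infty$ and $C_F^\infty:=\overline{\mathrm{conv}\,E_F^\infty}$ (closure in $C[0,1]$ of the convex hull). For a set $S$ of functions on $[0,1]$ and a function $\varphi$ on $[0,1]$, write $S\cong\{\varphi\}$ if for every $H\in S$ there is a constant $C=C(H)>0$ with $C^{-1}\varphi(t)\le H(t)\le C\varphi(t)$ for all $0<t\le 1$; write $S\equiv\{\varphi\}$ if there is a single constant $C>0$ such that this holds for all $H\in S$. *)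

theory Defs
  imports "HOL-Analysis.Analysis"
begin

definition orlicz_function :: "(real \<Rightarrow> real) \<Rightarrow> bool" where
  "orlicz_function F \<longleftrightarrow> mono_on {0..} F \<and> convex_on {0..} F \<and> F 0 = 0
     \<and> filterlim F at_top at_top"

text \<open>Closure in C[0,1] (sup norm on [0,1]); functions are real \<Rightarrow> real, only values
  on [0,1] matter.\<close>
definition C01_closure :: "(real \<Rightarrow> real) set \<Rightarrow> (real \<Rightarrow> real) set" where
  "C01_closure S = {g. continuous_on {0..1} g \<and>
      (\<forall>e>0. \<exists>f\<in>S. \<forall>x\<in>{0..1}. \<bar>f x - g x\<bar> < e)}"

definition fun_conv :: "(real \<Rightarrow> real) set \<Rightarrow> (real \<Rightarrow> real) set" where
  "fun_conv S = {h. \<exists>(n::nat) (a::nat \<Rightarrow> real) (f::nat \<Rightarrow> real \<Rightarrow> real).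
      (\<forall>i<n. 0 \<le> a i \<and> f i \<in> S) \<and> (\<Sum>i<n. a i) = 1 \<and>
      h = (\<lambda>x. \<Sum>i<n. a i * f i x)}"

definition E_FA :: "(real \<Rightarrow> real) \<Rightarrow> real \<Rightarrow> (real \<Rightarrow> real) set" where
  "E_FA F A = C01_closure {(\<lambda>x. F (x * y) / F y) | y. y > A}"

definition E_F :: "(real \<Rightarrow> real) \<Rightarrow> (real \<Rightarrow> real) set" where
  "E_F F = (\<Inter>A\<in>{0<..}. E_FA F A)"

definition C_F :: "(real \<Rightarrow> real) \<Rightarrow> (real \<Rightarrow> real) set" where
  "C_F F = C01_closure (fun_conv (E_F F))"

text \<open>S \<cong> {phi}: each H has its own constant.\<close>
definition equiv_each :: "(real \<Rightarrow> real) set \<Rightarrow> (real \<Rightarrow> real) \<Rightarrow> bool" where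
  "equiv_each S \<phi> \<longleftrightarrow> (\<forall>H\<in>S. \<exists>C>0. \<forall>t\<in>{0<..1}.
      \<phi> t / C \<le> H t \<and> H t \<le> C * \<phi> t)"

text \<open>S \<equiv> {phi}: a single uniform constant.\<close>
definition equiv_unif :: "(real \<Rightarrow> real) set \<Rightarrow> (real \<Rightarrow> real) \<Rightarrow> bool" where
  "equiv_unif S \<phi> \<longleftrightarrow> (\<exists>C>0. \<forall>H\<in>S. \<forall>t\<in>{0<..1}.
      \<phi> t / C \<le> H t \<and> H t \<le> C * \<phi> t)"

end

theory Submission
  imports Defs
begin


definition aa :: "nat \<Rightarrow> real" where "aa n = real (n*n)"

fun PP :: "nat \<Rightarrow> real" where
  "PP 0 = 1" | "PP (Suc n) = PP n * (2 * real n + 2)"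

definition LL :: "nat \<Rightarrow> real \<Rightarrow> real" where "LL n s = PP n * (1 + s - aa n)"
definition idx :: "real \<Rightarrow> nat" where "idx s = (LEAST n. s < aa (Suc n))"
definition pp :: "real \<Rightarrow> real" where "pp s = (if s < 0 then 1 else LL (idx s) s)"
definition Phi :: "real \<Rightarrow> real" where "Phi z = (if z \<le> 0 then 0 else z * pp (ln z))"

lemma aa_mono: "m \<le> n \<Longrightarrow> aa m \<le> aa n"
  unfolding aa_def by (simp add: mult_mono)

lemma aa_Suc: "aa (Suc n) - aa n = 2 * real n + 1"
  unfolding aa_def by (simp add: algebra_simps)

lemma aa_ge: "real n \<le> aa n"
  unfolding aa_def by (cases n) auto

lemma PP_ge1: "PP n \<ge> 1"
  by (induction n) (auto, smt (verit) mult_le_cancel_left1 of_nat_0_le_iff)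

lemma PP_Suc_eq: "PP (Suc n) = PP n * (1 + (aa (Suc n) - aa n))"
  by (simp add: aa_Suc)

lemma LL_step: "LL (Suc n) s - LL n s = PP n * (2 * real n + 1) * (s - aa (Suc n))"
  unfolding LL_def using aa_Suc[of n] by (simp add: algebra_simps)

lemma chain_up: "m \<le> n \<Longrightarrow> aa n \<le> s \<Longrightarrow> LL m s \<le> LL n s"
proof (induction n)
  case 0 then show ?case by simp
next
  case (Suc n)
  show ?case
  proof (cases "m = Suc n")
    case True then show ?thesis by simp
  next
    case False
    then have "m \<le> n" using Suc by simp
    moreover have "aa n \<le> s" using aa_mono[of n "Suc n"] Suc by simp
    ultimately have "LL m s \<le> LL n s" using Suc by simp
    moreover have "LL (Suc n) s - LL n s \<ge> 0"
      unfolding LL_step using PP_ge1[of n] Suc(3) by (intro mult_nonneg_nonneg) auto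
    ultimately show ?thesis by simp
  qed
qed

lemma chain_down: "n \<le> m \<Longrightarrow> s \<le> aa (Suc n) \<Longrightarrow> LL m s \<le> LL n s"
proof (induction m)
  case 0 then show ?case by simp
next
  case (Suc m)
  show ?case
  proof (cases "n = Suc m")
    case True then show ?thesis by simp
  next
    case False
    then have "n \<le> m" using Suc by simp
    then have "LL m s \<le> LL n s" using Suc by simp
    moreover have "s \<le> aa (Suc m)" using aa_mono[of "Suc n" "Suc m"] \<open>n \<le> m\<close> Suc(3) by simp
    then have "LL (Suc m) s - LL m s \<le> 0"
      unfolding LL_step using PP_ge1[of m] by (intro mult_nonneg_nonpos) auto
    ultimately show ?thesis by simp
  qed
qed

lemma idx_ex: "\<exists>n. s < aa (Suc n)"
proof -
  obtain n :: nat where "s < real n" using reals_Archimedean2 by blast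
  then show ?thesis using aa_ge[of "Suc n"] by (intro exI[of _ n]) simp
qed

lemma idx_props: assumes "0 \<le> s" shows "aa (idx s) \<le> s" "s < aa (Suc (idx s))"
proof -
  show "s < aa (Suc (idx s))" unfolding idx_def using idx_ex LeastI_ex by metis
  show "aa (idx s) \<le> s"
  proof (cases "idx s")
    case 0 then show ?thesis using assms by (simp add: aa_def)
  next
    case (Suc k)
    then have "k < idx s" by simp
    then have "\<not> s < aa (Suc k)" unfolding idx_def using not_less_Least by blast
    then show ?thesis using Suc by simp
  qed
qed

lemma idx_eq: assumes "aa n \<le> s" "s < aa (Suc n)" shows "idx s = n"
  unfolding idx_def
proof (rule Least_equality)
  show "s < aa (Suc n)" by fact
  fix m assume "s < aa (Suc m)"
  show "n \<le> m"
  proof (rule ccontr)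
    assume "\<not> n \<le> m" then have "Suc m \<le> n" by simp
    then have "aa (Suc m) \<le> aa n" by (rule aa_mono)
    then show False using assms \<open>s < aa (Suc m)\<close> by simp
  qed
qed

lemma LL_le_pp: "LL n s \<le> pp s"
proof (cases "s < 0")
  case True
  show ?thesis
  proof (cases n)
    case 0 then show ?thesis using True by (simp add: pp_def LL_def aa_def)
  next
    case (Suc k)
    have "aa n \<ge> 1" using aa_ge[of n] Suc by simp
    then have "1 + s - aa n < 0" using True by simp
    then have "LL n s < 0" unfolding LL_def using PP_ge1[of n] by (simp add: mult_pos_neg)
    then show ?thesis using True by (simp add: pp_def)
  qed
next
  case False
  then have s: "0 \<le> s" by simp
  have p: "pp s = LL (idx s) s" using False by (simp add: pp_def)
  show ?thesis
  proof (cases "n \<le> idx s")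
    case True then show ?thesis using chain_up idx_props(1)[OF s] p by simp
  next
    case False
    then have "Suc (idx s) \<le> n" by simp
    then show ?thesis using chain_down[of "idx s" n s] idx_props(2)[OF s] p by simp
  qed
qed

lemma pp_ge1: "pp s \<ge> 1"
proof (cases "s < 0")
  case True then show ?thesis by (simp add: pp_def)
next
  case False
  then have "LL 0 s \<ge> 1" by (simp add: LL_def aa_def)
  then show ?thesis using LL_le_pp[of 0 s] by simp
qed

lemma pp_eq: assumes "aa n \<le> s" "s < aa (Suc n)" shows "pp s = LL n s"
proof -
  have "0 \<le> s" using assms aa_def by (smt (verit) of_nat_0_le_iff)
  then show ?thesis using idx_eq[OF assms] by (simp add: pp_def)
qed

lemma pp_mono: assumes "s \<le> s'" shows "pp s \<le> pp s'"
proof (cases "s < 0")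
  case True then show ?thesis using pp_ge1[of s'] by (simp add: pp_def)
next
  case False
  then have "pp s = LL (idx s) s" by (simp add: pp_def)
  also have "\<dots> \<le> LL (idx s) s'" unfolding LL_def using PP_ge1[of "idx s"] assms
    by (intro mult_left_mono) auto
  also have "\<dots> \<le> pp s'" by (rule LL_le_pp)
  finally show ?thesis .
qed



lemma Phi_pos: "z > 0 \<Longrightarrow> Phi z = z * pp (ln z)" by (simp add: Phi_def)

lemma Phi_ge: "z > 0 \<Longrightarrow> Phi z \<ge> z"
  using pp_ge1[of "ln z"] by (simp add: Phi_def)

lemma Phi_nonneg: "Phi z \<ge> 0"
  using pp_ge1[of "ln z"] by (simp add: Phi_def)

definition hh :: "nat \<Rightarrow> real \<Rightarrow> real" where "hh m z = PP m * (z + z * ln z - aa m * z)"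

lemma hh_convex: "convex_on {0<..} (hh m)"
proof (rule convex_on_realI[where f' = "\<lambda>z. PP m * (2 + ln z - aa m)"])
  show "connected ({0<..} :: real set)" by simp
  fix x :: real assume "x \<in> {0<..}"
  then show "(hh m has_real_derivative PP m * (2 + ln x - aa m)) (at x)"
    unfolding hh_def by (auto intro!: derivative_eq_intros simp: field_simps)
next
  fix x y :: real assume "x \<in> {0<..}" "y \<in> {0<..}" "x \<le> y"
  then show "PP m * (2 + ln x - aa m) \<le> PP m * (2 + ln y - aa m)"
    using PP_ge1[of m] by (intro mult_left_mono) auto
qed

lemma hh_le: "z > 0 \<Longrightarrow> hh m z \<le> Phi z"
proof -
  assume z: "z > 0"
  have "hh m z = z * LL m (ln z)" by (simp add: hh_def LL_def algebra_simps)
  also have "\<dots> \<le> z * pp (ln z)" using z LL_le_pp by (intro mult_left_mono) auto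
  finally show ?thesis using z by (simp add: Phi_def)
qed

lemma hh_eq: "z \<ge> 1 \<Longrightarrow> Phi z = hh (idx (ln z)) z"
proof -
  assume z: "z \<ge> 1"
  then have "\<not> ln z < 0" by simp
  then show ?thesis using z by (simp add: Phi_def pp_def hh_def LL_def algebra_simps)
qed

lemma Phi_mono: "mono_on {0..} Phi"
proof (rule mono_onI)
  fix x y :: real assume xy: "x \<in> {0..}" "y \<in> {0..}" "x \<le> y"
  show "Phi x \<le> Phi y"
  proof (cases "x = 0")
    case True then show ?thesis using Phi_nonneg[of y] by (simp add: Phi_def)
  next
    case False
    then have x: "x > 0" using xy by simp
    have "Phi x = x * pp (ln x)" using x by (simp add: Phi_def)
    also have "\<dots> \<le> y * pp (ln x)" using xy pp_ge1[of "ln x"] by (intro mult_right_mono) auto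
    also have "\<dots> \<le> y * pp (ln y)" using xy x by (intro mult_left_mono pp_mono) auto
    also have "\<dots> = Phi y" using x xy by (simp add: Phi_def)
    finally show ?thesis .
  qed
qed

lemma Phi_convex: "convex_on {0..} Phi"
proof (rule convex_on_linorderI)
  show "convex {0::real..}" by simp
  fix t x y :: real
  assume t: "t > 0" "t < 1" and xy: "x \<in> {0..}" "y \<in> {0..}" "x < y"
  define w where "w = (1 - t) * x + t * y"
  have y: "y > 0" using xy by simp
  show "Phi ((1 - t) *\<^sub>R x + t *\<^sub>R y) \<le> (1 - t) * Phi x + t * Phi y"
  proof (cases "x = 0")
    case True
    have ty: "t * y > 0" using t y by simp
    have "Phi (t * y) = t * y * pp (ln (t * y))" using ty by (simp add: Phi_def)
    also have "\<dots> \<le> t * y * pp (ln y)"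
      using ty t y by (intro mult_left_mono pp_mono) (auto simp: ln_mult)
    also have "\<dots> = t * Phi y" using y by (simp add: Phi_def)
    finally show ?thesis using True by (simp add: Phi_def)
  next
    case False
    then have x: "x > 0" using xy by simp
    have w: "w > 0" unfolding w_def using t x y by (simp add: add_pos_pos)
    show ?thesis
    proof (cases "w < 1")
      case True
      have "ln w < 0" using True w by simp
      then have "Phi w = w" using w by (simp add: Phi_def pp_def)
      also have "\<dots> \<le> (1 - t) * Phi x + t * Phi y"
        unfolding w_def using Phi_ge[OF x] Phi_ge[OF y] t
        by (intro add_mono mult_left_mono) auto
      finally show ?thesis by (simp add: w_def)
    next
      case False
      define m where "m = idx (ln w)"
      have "Phi w = hh m w" using False by (simp add: hh_eq m_def)
      also have "\<dots> \<le> (1 - t) * hh m x + t * hh m y"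
        using convex_onD[OF hh_convex[of m], of t x y] t x y by (simp add: w_def)
      also have "\<dots> \<le> (1 - t) * Phi x + t * Phi y"
        using hh_le[OF x] hh_le[OF y] t by (intro add_mono mult_left_mono) auto
      finally show ?thesis by (simp add: w_def)
    qed
  qed
qed

lemma Phi_orlicz: "orlicz_function Phi"
  unfolding orlicz_function_def
proof (intro conjI Phi_mono Phi_convex)
  show "Phi 0 = 0" by (simp add: Phi_def)
  show "filterlim Phi at_top at_top"
  proof (rule filterlim_at_top_mono[OF filterlim_ident])
    show "\<forall>\<^sub>F x in at_top. x \<le> Phi x"
      using eventually_gt_at_top[of 0] by eventually_elim (rule Phi_ge)
  qed
qed



definition Lf :: "real \<Rightarrow> real \<Rightarrow> real \<Rightarrow> real \<Rightarrow> real \<Rightarrow> real \<Rightarrow> real \<Rightarrow> (real \<Rightarrow> real) \<Rightarrow> real"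
  where "Lf c0 c1 c2 c3 x1 x2 x3 h = c0 + c1 * h x1 + c2 * h x2 + c3 * h x3"

lemma clos_pres:
  assumes S: "\<forall>f\<in>S. Lf c0 c1 c2 c3 x1 x2 x3 f \<ge> 0"
    and x: "x1 \<in> {0..1}" "x2 \<in> {0..1}" "x3 \<in> {0..1}"
    and g: "g \<in> C01_closure S"
  shows "Lf c0 c1 c2 c3 x1 x2 x3 g \<ge> 0"
proof (rule ccontr)
  assume "\<not> ?thesis"
  then have neg: "Lf c0 c1 c2 c3 x1 x2 x3 g < 0" by simp
  define K where "K = \<bar>c1\<bar> + \<bar>c2\<bar> + \<bar>c3\<bar> + 1"
  have K: "K > 0" unfolding K_def by simp
  define e where "e = - Lf c0 c1 c2 c3 x1 x2 x3 g / K"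
  have e: "e > 0" unfolding e_def using neg K by (simp add: divide_neg_pos)
  obtain f where f: "f \<in> S" "\<forall>x\<in>{0..1}. \<bar>f x - g x\<bar> < e"
    using g e unfolding C01_closure_def by blast
  have d1: "\<bar>c1 * f x1 - c1 * g x1\<bar> \<le> \<bar>c1\<bar> * e"
    proof -
    have "\<bar>c1 * f x1 - c1 * g x1\<bar> = \<bar>c1\<bar> * \<bar>f x1 - g x1\<bar>" by (metis abs_mult right_diff_distrib)
    also have "\<dots> \<le> \<bar>c1\<bar> * e" using f(2) x(1) by (intro mult_left_mono) (auto intro: less_imp_le)
    finally show ?thesis .
  qed
  have d2: "\<bar>c2 * f x2 - c2 * g x2\<bar> \<le> \<bar>c2\<bar> * e"
    proof -
    have "\<bar>c2 * f x2 - c2 * g x2\<bar> = \<bar>c2\<bar> * \<bar>f x2 - g x2\<bar>" by (metis abs_mult right_diff_distrib)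
    also have "\<dots> \<le> \<bar>c2\<bar> * e" using f(2) x(2) by (intro mult_left_mono) (auto intro: less_imp_le)
    finally show ?thesis .
  qed
  have d3: "\<bar>c3 * f x3 - c3 * g x3\<bar> \<le> \<bar>c3\<bar> * e"
    proof -
    have "\<bar>c3 * f x3 - c3 * g x3\<bar> = \<bar>c3\<bar> * \<bar>f x3 - g x3\<bar>" by (metis abs_mult right_diff_distrib)
    also have "\<dots> \<le> \<bar>c3\<bar> * e" using f(2) x(3) by (intro mult_left_mono) (auto intro: less_imp_le)
    finally show ?thesis .
  qed
  have "Lf c0 c1 c2 c3 x1 x2 x3 f - Lf c0 c1 c2 c3 x1 x2 x3 g \<le> (\<bar>c1\<bar> + \<bar>c2\<bar> + \<bar>c3\<bar>) * e"
    using d1 d2 d3 unfolding Lf_def by (simp add: abs_le_iff distrib_right)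
  also have "\<dots> < K * e" unfolding K_def using e by simp
  also have "K * e = - Lf c0 c1 c2 c3 x1 x2 x3 g" unfolding e_def using K by simp
  finally show False using S f(1) by fastforce
qed

lemma conv_pres:
  assumes S: "\<forall>f\<in>S. Lf c0 c1 c2 c3 x1 x2 x3 f \<ge> 0"
    and h: "h \<in> fun_conv S"
  shows "Lf c0 c1 c2 c3 x1 x2 x3 h \<ge> 0"
proof -
  obtain n :: nat and a :: "nat \<Rightarrow> real" and f :: "nat \<Rightarrow> real \<Rightarrow> real" where af: "\<forall>i<n. 0 \<le> a i \<and> f i \<in> S" "(\<Sum>i<n. a i) = 1"
    "h = (\<lambda>x. \<Sum>i<n. a i * f i x)"
    using h unfolding fun_conv_def mem_Collect_eq by (elim exE conjE) (rule that; assumption)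
  have "(\<Sum>i<n. a i * Lf c0 c1 c2 c3 x1 x2 x3 (f i)) =
     (\<Sum>i<n. a i * c0 + c1 * (a i * f i x1) + c2 * (a i * f i x2) + c3 * (a i * f i x3))"
    unfolding Lf_def by (rule sum.cong[OF refl]) (simp add: distrib_left mult.left_commute)
  also have "\<dots> = (\<Sum>i<n. a i) * c0 + c1 * (\<Sum>i<n. a i * f i x1) + c2 * (\<Sum>i<n. a i * f i x2)
      + c3 * (\<Sum>i<n. a i * f i x3)"
    by (simp only: sum.distrib sum_distrib_left sum_distrib_right)
  also have "\<dots> = Lf c0 c1 c2 c3 x1 x2 x3 h" unfolding Lf_def af(3) using af(2) by simp
  finally have "Lf c0 c1 c2 c3 x1 x2 x3 h = (\<Sum>i<n. a i * Lf c0 c1 c2 c3 x1 x2 x3 (f i))" by (rule sym)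
  also have "\<dots> \<ge> 0" using af(1) S by (intro sum_nonneg mult_nonneg_nonneg) simp_all
  finally show ?thesis .
qed

lemma EF_pres:
  assumes A: "\<exists>A. \<forall>y>A. Lf c0 c1 c2 c3 x1 x2 x3 (\<lambda>x. F (x * y) / F y) \<ge> 0"
    and x: "x1 \<in> {0..1}" "x2 \<in> {0..1}" "x3 \<in> {0..1}"
    and H: "H \<in> E_F F"
  shows "Lf c0 c1 c2 c3 x1 x2 x3 H \<ge> 0"
proof -
  obtain A where A: "\<forall>y>A. Lf c0 c1 c2 c3 x1 x2 x3 (\<lambda>x. F (x * y) / F y) \<ge> 0" using A by blast
  define A' where "A' = max A 1"
  have "A' \<in> {0<..}" unfolding A'_def by simp
  then have "H \<in> E_FA F A'" using H unfolding E_F_def by blast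
  then have H': "H \<in> C01_closure {(\<lambda>x. F (x * y) / F y) | y. y > A'}" unfolding E_FA_def .
  show ?thesis
  proof (rule clos_pres[OF _ x H'])
    show "\<forall>f\<in>{(\<lambda>x. F (x * y) / F y) | y. y > A'}. Lf c0 c1 c2 c3 x1 x2 x3 f \<ge> 0"
    proof
      fix f assume "f \<in> {(\<lambda>x. F (x * y) / F y) | y. y > A'}"
      then obtain y where "y > A'" "f = (\<lambda>x. F (x * y) / F y)" by blast
      moreover have "y > A" using \<open>y > A'\<close> unfolding A'_def by simp
      ultimately show "Lf c0 c1 c2 c3 x1 x2 x3 f \<ge> 0" using A by simp
    qed
  qed
qed

lemma CF_pres:
  assumes A: "\<exists>A. \<forall>y>A. Lf c0 c1 c2 c3 x1 x2 x3 (\<lambda>x. F (x * y) / F y) \<ge> 0"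
    and x: "x1 \<in> {0..1}" "x2 \<in> {0..1}" "x3 \<in> {0..1}"
    and G: "G \<in> C_F F"
  shows "Lf c0 c1 c2 c3 x1 x2 x3 G \<ge> 0"
proof -
  have 1: "\<forall>H\<in>E_F F. Lf c0 c1 c2 c3 x1 x2 x3 H \<ge> 0"
  proof
    fix H assume "H \<in> E_F F"
    then show "Lf c0 c1 c2 c3 x1 x2 x3 H \<ge> 0" by (rule EF_pres[OF A x])
  qed
  have 2: "\<forall>h\<in>fun_conv (E_F F). Lf c0 c1 c2 c3 x1 x2 x3 h \<ge> 0"
  proof
    fix h assume "h \<in> fun_conv (E_F F)"
    then show "Lf c0 c1 c2 c3 x1 x2 x3 h \<ge> 0" by (rule conv_pres[OF 1])
  qed
  have G': "G \<in> C01_closure (fun_conv (E_F F))" using G by (simp only: C_F_def)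
  show ?thesis by (rule clos_pres[OF 2 x G'])
qed



lemma pos_arg:
  fixes G :: "real \<Rightarrow> real"
  assumes g1: "G 1 = 1"
    and mono: "\<And>s t. 0 < s \<Longrightarrow> s \<le> t \<Longrightarrow> t \<le> 1 \<Longrightarrow> G s / s \<le> G t / t"
    and cond: "\<And>t s. 0 < t \<Longrightarrow> t \<le> s \<Longrightarrow> s \<le> 1/2 \<Longrightarrow> G (2 * s)/(2 * s) - G s / s \<le> G t / t"
  shows "\<exists>C>0. \<forall>t\<in>{0<..1}. t / C \<le> G t \<and> G t \<le> C * t"
proof -
  have up: "G t \<le> t" if "0 < t" "t \<le> 1" for t
  proof -
    have "G t / t \<le> 1" using mono[of t 1] that g1 by simp
    then show ?thesis using that by (simp add: divide_le_eq)
  qed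
  show ?thesis
  proof (cases "\<exists>s0. 0 < s0 \<and> s0 \<le> 1/2 \<and> G (2 * s0)/(2 * s0) - G s0 / s0 > 0")
    case True
    then obtain s0 where s0: "0 < s0" "s0 \<le> 1/2" "G (2 * s0)/(2 * s0) - G s0 / s0 > 0" by blast
    define d where "d = G (2 * s0)/(2 * s0) - G s0 / s0"
    have d: "d > 0" using s0 d_def by simp
    have rs0: "G s0 / s0 \<ge> d" using cond[of s0 s0] s0 d_def by simp
    have r2: "G (2 * s0)/(2 * s0) \<le> 1" using up[of "2 * s0"] s0 by simp
    have d1: "d \<le> 1" using rs0 r2 d_def d by linarith
    have lb: "G t / t \<ge> d" if "0 < t" "t \<le> 1" for t
    proof (cases "t \<le> s0")
      case True then show ?thesis using cond[of t s0] that s0 d_def by simp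
    next
      case False then show ?thesis using mono[of s0 t] that s0 rs0 by simp
    qed
    show ?thesis
    proof (intro exI[of _ "1/d"] conjI ballI)
      show "1/d > 0" using d by simp
      fix t assume t: "t \<in> {0<..1::real}"
      have "d \<le> G t / t" using lb t by simp
      then show "t / (1/d) \<le> G t" using t by (simp add: le_divide_eq mult.commute)
      have "t \<le> 1/d * t" using d d1 t by (simp add: field_simps)
      then show "G t \<le> 1/d * t" using up t by force
    qed
  next
    case False
    then have nd: "G (2 * s)/(2 * s) \<le> G s / s" if "0 < s" "s \<le> 1/2" for s using that by force
    have ind: "G ((1/2)^k) / (1/2)^k \<ge> 1" for k
    proof (induction k)
      case 0 then show ?case using g1 by auto
    next
      case (Suc k)
      have "(1/2::real)^Suc k > 0" by simp
      moreover have "(1/2::real)^Suc k \<le> 1/2" by (simp add: power_le_one)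
      ultimately have "G (2 * (1/2)^Suc k)/(2 * (1/2)^Suc k) \<le> G ((1/2)^Suc k) / (1/2)^Suc k"
        by (rule nd)
      moreover have "2 * (1/2::real)^Suc k = (1/2)^k" by simp
      ultimately have "G ((1/2)^k)/((1/2)^k) \<le> G ((1/2)^Suc k) / (1/2)^Suc k" by simp
      then show ?case using Suc by linarith
    qed
    show ?thesis
    proof (intro exI[of _ 1] conjI ballI)
      fix t assume t: "t \<in> {0<..1::real}"
      obtain k where "(1/2::real)^k < t" using real_arch_pow_inv[of t "1/2"] t by auto
      moreover have "(1/2::real)^k > 0" by simp
      ultimately have "G ((1/2)^k) / (1/2)^k \<le> G t / t" using t by (intro mono) auto
      then have "G t / t \<ge> 1" using ind[of k] by linarith
      then show "t / 1 \<le> G t" using t by (simp add: le_divide_eq)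
      show "G t \<le> 1 * t" using up t by simp
    qed simp
  qed
qed



lemma fy_ratio: assumes "y > 0" "x > 0"
  shows "Phi (x * y) / Phi y = x * (pp (ln x + ln y) / pp (ln y))"
proof -
  have xy: "x * y > 0" using assms by simp
  have 1: "Phi (x*y) = (x*y) * pp (ln x + ln y)" using Phi_pos[OF xy] assms by (simp add: ln_mult)
  have 2: "Phi y = y * pp (ln y)" using Phi_pos[OF assms(1)] .
  have "pp (ln y) > 0" using pp_ge1[of "ln y"] by simp
  then show ?thesis unfolding 1 2 using assms by (simp add: field_simps)
qed

lemma key:
  assumes b: "0 \<le> \<beta>" "\<beta> \<le> \<alpha>" and M: "M \<ge> 1" "2 * real M * (1 - ln 2) \<ge> ln 2 + \<alpha>"
    and sig: "aa M + \<beta> \<le> \<sigma>"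
  shows "pp (\<sigma> - \<beta> + ln 2) - pp (\<sigma> - \<beta>) \<le> pp (\<sigma> - \<alpha>)"
proof -
  define D :: real where "D = ln 2"
  have D: "0 \<le> D" "D < 1" unfolding D_def using ln_2_less_1 by auto
  define X where "X = \<sigma> - \<beta> + D"
  have X: "aa M \<le> X" unfolding X_def using sig D by simp
  have X0: "0 \<le> X" using X aa_def by (smt (verit) of_nat_0_le_iff)
  define m where "m = idx X"
  have m: "aa m \<le> X" "X < aa (Suc m)" using idx_props[OF X0] m_def by auto
  have mM: "M \<le> m"
  proof (rule ccontr)
    assume "\<not> M \<le> m" then have "Suc m \<le> M" by simp
    then have "aa (Suc m) \<le> aa M" by (rule aa_mono)
    then show False using m X by simp
  qed
  then obtain k where k: "m = Suc k" using M(1) by (cases m) auto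
  have "pp X = LL m X" using pp_eq[OF m] .
  moreover have "LL m (X - D) \<le> pp (X - D)" by (rule LL_le_pp)
  ultimately have diff: "pp X - pp (X - D) \<le> PP m * D" unfolding LL_def by (simp add: algebra_simps)
  have "LL k (\<sigma> - \<alpha>) \<le> pp (\<sigma> - \<alpha>)" by (rule LL_le_pp)
  moreover have "LL k (\<sigma> - \<alpha>) \<ge> PP k * (2 * real k + 2 - D - \<alpha>)"
  proof -
    have "\<sigma> - \<alpha> \<ge> X - D - \<alpha>" unfolding X_def using b by simp
    then have "1 + (\<sigma> - \<alpha>) - aa k \<ge> 1 + aa m - aa k - D - \<alpha>" using m by simp
    also have "1 + aa m - aa k = 2 * real k + 2" using aa_Suc[of k] k by simp
    finally show ?thesis unfolding LL_def using PP_ge1[of k] by (intro mult_left_mono) auto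
  qed
  moreover have "PP k * (2 * real k + 2 - D - \<alpha>) \<ge> PP m * D"
  proof -
    have "2 * real m * (1 - D) \<ge> 2 * real M * (1 - D)" using mM D by (intro mult_right_mono) auto
    then have "2 * real m * (1 - D) \<ge> D + \<alpha>" using M D_def by simp
    then have "(2 * real k + 2) * (1 - D) \<ge> D + \<alpha>" using k by (simp add: algebra_simps)
    then have "2 * real k + 2 - D - \<alpha> \<ge> (2 * real k + 2) * D" by (simp add: algebra_simps)
    then have "PP k * (2 * real k + 2 - D - \<alpha>) \<ge> PP k * ((2 * real k + 2) * D)"
      using PP_ge1[of k] by (intro mult_left_mono) auto
    then show ?thesis using k by (simp add: mult.assoc)
  qed
  ultimately have "pp (\<sigma> - \<alpha>) \<ge> PP m * D" by linarith
  then show ?thesis using diff unfolding X_def D_def by simp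
qed

lemma cond_Phi:
  assumes ts: "0 < t" "t \<le> s" "s \<le> 1/2"
  shows "\<exists>A. \<forall>y>A. Lf 0 (1/t) (- (1/(2 * s))) (1/s) t (2 * s) s (\<lambda>x. Phi (x * y) / Phi y) \<ge> 0"
proof -
  define \<alpha> where "\<alpha> = - ln t"
  define \<beta> where "\<beta> = - ln s"
  have s0: "s > 0" using ts by simp
  have b: "0 \<le> \<beta>" "\<beta> \<le> \<alpha>" unfolding \<alpha>_def \<beta>_def using ts by auto
  have D: "ln (2::real) < 1" by (rule ln_2_less_1)
  obtain M0 :: nat where M0: "(ln 2 + \<alpha>) / (2 * (1 - ln 2)) < real M0" using reals_Archimedean2 by blast
  define M where "M = Suc M0"
  have M: "M \<ge> 1" "2 * real M * (1 - ln 2) \<ge> ln 2 + \<alpha>"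
  proof -
    show "M \<ge> 1" unfolding M_def by simp
    have "(ln 2 + \<alpha>) / (2 * (1 - ln 2)) \<le> real M" using M0 unfolding M_def by simp
    then show "2 * real M * (1 - ln 2) \<ge> ln 2 + \<alpha>" using D by (simp add: divide_le_eq mult.commute mult.left_commute)
  qed
  show ?thesis
  proof (intro exI[of _ "exp (aa M + \<beta>)"] allI impI)
    fix y assume y: "exp (aa M + \<beta>) < y"
    have ypos: "y > 0" using y by (smt (verit) exp_gt_zero)
    define \<sigma> where "\<sigma> = ln y"
    have sig: "aa M + \<beta> \<le> \<sigma>" unfolding \<sigma>_def using y ypos by (smt (verit) exp_le_cancel_iff exp_ln)
    have k: "pp (\<sigma> - \<beta> + ln 2) - pp (\<sigma> - \<beta>) \<le> pp (\<sigma> - \<alpha>)" by (rule key[OF b M sig])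
    have pps: "pp \<sigma> > 0" using pp_ge1[of \<sigma>] by simp
    have e1: "1/t * (Phi (t * y) / Phi y) = pp (\<sigma> - \<alpha>) / pp \<sigma>"
      using fy_ratio[OF ypos ts(1)] ts unfolding \<alpha>_def \<sigma>_def by (simp add: add.commute)
    have e2: "1/(2 * s) * (Phi (2 * s * y) / Phi y) = pp (\<sigma> - \<beta> + ln 2) / pp \<sigma>"
      using fy_ratio[OF ypos, of "2 * s"] s0 unfolding \<beta>_def \<sigma>_def by (simp add: ln_mult add_ac)
    have e3: "1/s * (Phi (s * y) / Phi y) = pp (\<sigma> - \<beta>) / pp \<sigma>"
      using fy_ratio[OF ypos s0] s0 unfolding \<beta>_def \<sigma>_def by (simp add: add.commute)
    have "Lf 0 (1/t) (- (1/(2 * s))) (1/s) t (2 * s) s (\<lambda>x. Phi (x * y) / Phi y)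
       = (pp (\<sigma> - \<alpha>) - pp (\<sigma> - \<beta> + ln 2) + pp (\<sigma> - \<beta>)) / pp \<sigma>"
      unfolding Lf_def using e1 e2 e3 by (simp add: diff_divide_distrib add_divide_distrib)
    also have "\<dots> \<ge> 0" using k pps by simp
    finally show "Lf 0 (1/t) (- (1/(2 * s))) (1/s) t (2 * s) s (\<lambda>x. Phi (x * y) / Phi y) \<ge> 0" .
  qed
qed

lemma mono_Phi:
  assumes st: "0 < s" "s \<le> t" "t \<le> 1"
  shows "\<exists>A. \<forall>y>A. Lf 0 (1/t) (- (1/s)) 0 t s 1 (\<lambda>x. Phi (x * y) / Phi y) \<ge> 0"
proof (intro exI[of _ 0] allI impI)
  fix y :: real assume y: "y > 0"
  have t0: "t > 0" using st by simp
  have pps: "pp (ln y) > 0" using pp_ge1[of "ln y"] by simp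
  have "pp (ln s + ln y) \<le> pp (ln t + ln y)" using st by (intro pp_mono) simp
  then have "pp (ln s + ln y) / pp (ln y) \<le> pp (ln t + ln y) / pp (ln y)"
    using pps by (simp add: divide_right_mono)
  then show "Lf 0 (1/t) (- (1/s)) 0 t s 1 (\<lambda>x. Phi (x * y) / Phi y) \<ge> 0"
    unfolding Lf_def using fy_ratio[OF y t0] fy_ratio[OF y st(1)] t0 st by simp
qed

lemma one_aux: "y > 0 \<Longrightarrow> Phi (1 * y) / Phi y = 1"
proof -
  assume y: "y > 0"
  have "Phi y > 0" using Phi_ge[OF y] y by simp
  then show ?thesis by simp
qed

lemma one_Phi:
  shows "\<exists>A. \<forall>y>A. Lf (-1) 1 0 0 1 1 1 (\<lambda>x. Phi (x * y) / Phi y) \<ge> 0"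
    and "\<exists>A. \<forall>y>A. Lf 1 (-1) 0 0 1 1 1 (\<lambda>x. Phi (x * y) / Phi y) \<ge> 0"
proof -
  have p: "Phi y > 0" if "y > 0" for y using Phi_ge[OF that] that by simp
  show "\<exists>A. \<forall>y>A. Lf (-1) 1 0 0 1 1 1 (\<lambda>x. Phi (x * y) / Phi y) \<ge> 0"
    by (intro exI[of _ 0] allI impI) (use p in \<open>force simp add: Lf_def\<close>)
  show "\<exists>A. \<forall>y>A. Lf 1 (-1) 0 0 1 1 1 (\<lambda>x. Phi (x * y) / Phi y) \<ge> 0"
    by (intro exI[of _ 0] allI impI) (use p in \<open>force simp add: Lf_def\<close>)
qed

lemma CF_equiv: "equiv_each (C_F Phi) (\<lambda>t. t)"
  unfolding equiv_each_def
proof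
  fix G assume G: "G \<in> C_F Phi"
  have one: "G 1 = 1"
    using CF_pres[OF one_Phi(1) _ _ _ G] CF_pres[OF one_Phi(2) _ _ _ G] by (simp add: Lf_def)
  have mono: "G s / s \<le> G t / t" if "0 < s" "s \<le> t" "t \<le> 1" for s t
    using CF_pres[OF mono_Phi[OF that] _ _ _ G] that by (simp add: Lf_def)
  have cond: "G (2 * s)/(2 * s) - G s / s \<le> G t / t" if "0 < t" "t \<le> s" "s \<le> 1/2" for t s
    using CF_pres[OF cond_Phi[OF that] _ _ _ G] that by (simp add: Lf_def)
  show "\<exists>C>0. \<forall>t\<in>{0<..1}. t / C \<le> G t \<and> G t \<le> C * t"
    by (rule pos_arg[OF one mono cond])
qed



definition Hv :: "real \<Rightarrow> real \<Rightarrow> real" where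
  "Hv v x = x * (1 + v + ln (max x (exp (- v)))) / (1 + v)"

lemma xlnx: fixes x :: real assumes "0 < x" "x \<le> 1" shows "x * (- ln x) \<le> 1"
proof -
  have "ln (1/x) \<le> 1/x - 1" using assms by (intro ln_le_minus_one) simp
  then have "- ln x \<le> 1/x" using assms by (simp add: ln_div)
  then have "x * (- ln x) \<le> x * (1/x)" using assms by (intro mult_left_mono) auto
  then show ?thesis using assms by simp
qed

lemma Hv_approx:
  assumes v: "v \<ge> 0" and n: "n = Suc k" "v < 2 * real n + 1"
    and x: "0 \<le> x" "x \<le> 1"
  shows "\<bar>Phi (x * exp (aa n + v)) / Phi (exp (aa n + v)) - Hv v x\<bar> \<le> 1 / (2 * real n)"
proof (cases "x = 0")
  case True then show ?thesis by (simp add: Phi_def Hv_def)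
next
  case False
  then have x0: "x > 0" using x by simp
  define \<sigma> where "\<sigma> = aa n + v"
  have y0: "exp \<sigma> > 0" by simp
  have sig: "aa n \<le> \<sigma>" "\<sigma> < aa (Suc n)" unfolding \<sigma>_def using v n aa_Suc[of n] by auto
  have ppsig: "pp \<sigma> = PP n * (1 + v)" using pp_eq[OF sig] unfolding LL_def \<sigma>_def by simp
  have PPn: "PP n \<ge> 1" by (rule PP_ge1)
  have f: "Phi (x * exp \<sigma>) / Phi (exp \<sigma>) = x * (pp (ln x + \<sigma>) / (PP n * (1 + v)))"
    using fy_ratio[OF y0 x0] ppsig by simp
  show ?thesis
  proof (cases "exp (- v) \<le> x")
    case True
    then have lx: "- v \<le> ln x" using x0 by (metis exp_le_cancel_iff exp_ln)
    have "ln x \<le> 0" using x x0 by simp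
    then have r: "aa n \<le> ln x + \<sigma>" "ln x + \<sigma> < aa (Suc n)" using lx sig unfolding \<sigma>_def by auto
    have "pp (ln x + \<sigma>) = PP n * (1 + v + ln x)" using pp_eq[OF r] unfolding LL_def \<sigma>_def by (simp add: algebra_simps)
    then have "pp (ln x + \<sigma>) / (PP n * (1 + v)) = (1 + v + ln x) / (1 + v)"
      using PPn by simp
    moreover have "max x (exp (- v)) = x" using True by simp
    ultimately have "Phi (x * exp \<sigma>) / Phi (exp \<sigma>) = Hv v x"
      unfolding f Hv_def by simp
    then show ?thesis unfolding \<sigma>_def by simp
  next
    case False
    then have lx: "ln x < - v" using x0 by (metis exp_le_cancel_iff exp_ln less_le_not_le nle_le)
    have H: "Hv v x = x / (1 + v)" using False unfolding Hv_def by (simp add: max_def)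
    define \<rho> where "\<rho> = ln x + \<sigma>"
    have \<rho>: "\<rho> < aa n" unfolding \<rho>_def \<sigma>_def using lx by simp
    have up: "pp \<rho> \<le> PP n"
    proof -
      have "pp \<rho> \<le> pp (aa n)" using \<rho> by (intro pp_mono) simp
      also have "pp (aa n) = PP n" using pp_eq[of n "aa n"] aa_mono[of n "Suc n"] sig
        unfolding LL_def by simp
      finally show ?thesis .
    qed
    have lo: "pp \<rho> \<ge> PP n - PP k * (- ln x)"
    proof -
      have "LL k \<rho> \<le> pp \<rho>" by (rule LL_le_pp)
      moreover have "LL k \<rho> = PP k * (2 * real k + 2) - PP k * (aa n - \<rho>)"
        unfolding LL_def using aa_Suc[of k] n by (simp add: algebra_simps)
      moreover have "PP k * (2 * real k + 2) = PP n" using n by simp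
      moreover have "PP k * (aa n - \<rho>) \<le> PP k * (- ln x)"
        using PP_ge1[of k] v unfolding \<rho>_def \<sigma>_def by (intro mult_left_mono) auto
      ultimately show ?thesis by linarith
    qed
    have "Phi (x * exp \<sigma>) / Phi (exp \<sigma>) - Hv v x = x * (pp \<rho> - PP n) / (PP n * (1 + v))"
    proof -
      have "x / (1 + v) = x * PP n / (PP n * (1 + v))" using PPn by simp
      then show ?thesis unfolding f H \<rho>_def
        by (simp add: diff_divide_distrib right_diff_distrib add.commute)
    qed
    moreover have "x * (pp \<rho> - PP n) \<le> 0" using up x0 by (simp add: mult_nonneg_nonpos)
    moreover have "x * (pp \<rho> - PP n) \<ge> - (PP k * (x * (- ln x)))"
    proof -
      have "x * (pp \<rho> - PP n) \<ge> x * (- (PP k * (- ln x)))" using lo x0 by (intro mult_left_mono) auto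
      then show ?thesis by (simp add: algebra_simps)
    qed
    moreover have "PP k * (x * (- ln x)) \<le> PP k * 1" using xlnx[OF x0 x(2)] PP_ge1[of k]
      by (intro mult_left_mono) auto
    ultimately have "\<bar>Phi (x * exp \<sigma>) / Phi (exp \<sigma>) - Hv v x\<bar> \<le> PP k / (PP n * (1 + v))"
      using PPn v by (simp add: abs_le_iff divide_le_eq le_divide_eq neg_divide_le_eq) 
    also have "\<dots> \<le> PP k / PP n" using PPn v PP_ge1[of k]
      by (intro divide_left_mono mult_pos_pos) (auto simp: mult_le_cancel_left1)
    also have "PP k / PP n = 1 / (2 * real n)"
    proof -
      have "PP n = PP k * (2 * real n)" using n by (simp add: algebra_simps)
      moreover have "PP k \<noteq> 0" using PP_ge1[of k] by simp
      ultimately show ?thesis by simp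
    qed
    finally show ?thesis unfolding \<sigma>_def by simp
  qed
qed



lemma Hv_cont: assumes "v \<ge> 0" shows "continuous_on {0..1} (Hv v)"
proof -
  have "\<forall>x\<in>{0..1::real}. max x (exp (- v)) \<noteq> 0" by (smt (verit) exp_gt_zero)
  then show ?thesis unfolding Hv_def using assms by (intro continuous_intros) auto
qed

lemma Hv_in: assumes v: "v \<ge> 0" shows "Hv v \<in> E_F Phi"
  unfolding E_F_def
proof
  fix A :: real assume "A \<in> {0<..}"
  then have A: "A > 0" by simp
  show "Hv v \<in> E_FA Phi A"
    unfolding E_FA_def C01_closure_def
  proof (intro CollectI conjI allI impI Hv_cont[OF v])
    fix e :: real assume e: "e > 0"
    obtain N :: nat where N: "max (max (ln A) v) (1/e) < real N" using reals_Archimedean2 by blast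
    define n where "n = Suc N"
    define y where "y = exp (aa n + v)"
    have n: "n = Suc N" "v < 2 * real n + 1" using N unfolding n_def by auto
    have "real n \<le> aa n" by (rule aa_ge)
    then have "ln A < aa n + v" using N v unfolding n_def by auto
    then have yA: "y > A" unfolding y_def using A by (metis exp_less_mono exp_ln)
    have "1 / e < 2 * real n" using N unfolding n_def by auto
    then have en: "1 / (2 * real n) < e" using e by (simp add: divide_less_eq mult.commute)
    show "\<exists>f\<in>{(\<lambda>x. Phi (x * y) / Phi y) |y. A < y}. \<forall>x\<in>{0..1}. \<bar>f x - Hv v x\<bar> < e"
    proof (intro bexI ballI)
      fix x :: real assume "x \<in> {0..1}"
      then have "\<bar>Phi (x * y) / Phi y - Hv v x\<bar> \<le> 1 / (2 * real n)"
        unfolding y_def using Hv_approx[OF v n] by auto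
      then show "\<bar>(\<lambda>x. Phi (x * y) / Phi y) x - Hv v x\<bar> < e" using en by simp
    next
      show "(\<lambda>x. Phi (x * y) / Phi y) \<in> {(\<lambda>x. Phi (x * y) / Phi y) |y. A < y}" using yA by blast
    qed
  qed
qed

lemma EF_not_unif: "\<not> equiv_unif (E_F Phi) (\<lambda>t. t)"
proof
  assume "equiv_unif (E_F Phi) (\<lambda>t. t)"
  then obtain C where C: "C > 0" "\<forall>H\<in>E_F Phi. \<forall>t\<in>{0<..1}. t / C \<le> H t \<and> H t \<le> C * t"
    unfolding equiv_unif_def by blast
  define t where "t = exp (- C)"
  have t: "t \<in> {0<..1}" unfolding t_def using C by simp
  have "t / C \<le> Hv C t" using C(2) Hv_in[of C] C(1) t by auto
  moreover have "Hv C t = t / (1 + C)" unfolding Hv_def t_def by simp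
  ultimately have "t / C \<le> t / (1 + C)" by simp
  moreover have "t / (1 + C) < t / C" using C t by (intro divide_strict_left_mono) auto
  ultimately show False by simp
qed

theorem mainTheorem1:
  shows "\<exists>\<Phi>. orlicz_function \<Phi> \<and> equiv_each (C_F \<Phi>) (\<lambda>t. t)
              \<and> \<not> equiv_unif (E_F \<Phi>) (\<lambda>t. t)"
  using Phi_orlicz CF_equiv EF_not_unif by blast


end
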